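(* For integers $n\ge2$, $0<k<n$ and $0<i\le n$, the number of directed paths in $\Gamma$ from $(i,0)$ to $(n,k)$ is $$\pi(n,k,i)=\sum_{s=0}^{\min\{k,\,n-i\}}\binom{k}{s}\binom{n-k}{n-i-s}\,\pi(n-i,s,0).$$
   Context: Let $\Gamma$ be the directed graph whose nodes are the pairs $(n,k)$ of integers with $n\ge k\ge 0$, and whose edges are, for all $n\ge k\ge 0$: $(n+1,k)\to(n+1,k+1)$ and $(n,n-k)\to(n+1,k+1)$. $\pi(n,k,i)$ denotes the number of directed paths in $\Gamma$ from $(i,0)$ to $(n,k)$, where the trivial path counts when $(i,0)=(n,k)$ (so $\pi(0,0,0)=1$, and $\pi(m,0,0)=0$ for $m\ge1$). *)

theory Defs
  imports Main
begin

definition gamma_edge :: "nat \<times> nat \<Rightarrow> nat \<times> nat \<Rightarrow> bool" where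
  "gamma_edge u v \<longleftrightarrow>
     (\<exists>n k. k \<le> n \<and>
        ((u = (n + 1, k) \<and> v = (n + 1, k + 1)) \<or> (u = (n, n - k) \<and> v = (n + 1, k + 1))))"

text \<open>Directed paths from a to b, as nonempty vertex lists whose consecutive
  entries are joined by edges (the one-vertex list is the trivial path).\<close>

definition gamma_paths :: "nat \<times> nat \<Rightarrow> nat \<times> nat \<Rightarrow> (nat \<times> nat) list set" where
  "gamma_paths a b = {xs. xs \<noteq> [] \<and> hd xs = a \<and> last xs = b \<and>
       (\<forall>j. j + 1 < length xs \<longrightarrow> gamma_edge (xs ! j) (xs ! (j + 1)))}"

definition pi_count :: "nat \<Rightarrow> nat \<Rightarrow> nat \<Rightarrow> nat" where
  "pi_count n k i = card (gamma_paths (i, 0) (n, k))"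

end

theory Submission imports Defs begin
lemma alg:
  fixes x y :: "nat \<Rightarrow> nat"
  assumes xy: "\<And>s. s \<le> M \<Longrightarrow> x (Suc s) = x s + y (M - s)"
  shows "(\<Sum>s\<le>Suc M. (Suc a choose s) * (b choose (Suc M - s)) * x s) =
         (\<Sum>s\<le>Suc M. (a choose s) * (Suc b choose (Suc M - s)) * x s) +
         (\<Sum>u\<le>M. (b choose u) * (a choose (M - u)) * y u)"
proof -
  define A where "A = (\<Sum>s\<le>Suc M. (a choose s) * (b choose (Suc M - s)) * x s)"
  define B where "B = (\<Sum>s\<le>M. (a choose s) * (b choose (M - s)) * x s)"
  define C where "C = (\<Sum>s\<le>M. (a choose Suc s) * (b choose (M - s)) * x (Suc s))"
  define D where "D = (\<Sum>s\<le>M. (a choose s) * (b choose (M - s)) * y (M - s))"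
  have L1: "(\<Sum>s\<le>Suc M. (Suc a choose s) * (b choose (Suc M - s)) * x s) =
     (b choose Suc M) * x 0 + (\<Sum>s\<le>M. (a choose s) * (b choose (M - s)) * x (Suc s)) + C"
    unfolding C_def
    by (subst sum.atMost_Suc_shift) (simp add: algebra_simps sum.distrib)
  have L2: "A = (b choose Suc M) * x 0 + C"
    unfolding A_def C_def by (subst sum.atMost_Suc_shift) simp
  have L3: "(\<Sum>s\<le>Suc M. (a choose s) * (Suc b choose (Suc M - s)) * x s) = A + B"
  proof -
    have "(\<Sum>s\<le>M. (a choose s) * (Suc b choose (Suc M - s)) * x s) =
          (\<Sum>s\<le>M. (a choose s) * (b choose (Suc M - s)) * x s) + B"
      unfolding B_def sum.distrib[symmetric]
      by (rule sum.cong) (auto simp: Suc_diff_le algebra_simps)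
    then show ?thesis unfolding A_def by simp
  qed
  have L4: "(\<Sum>s\<le>M. (a choose s) * (b choose (M - s)) * x (Suc s)) = B + D"
    unfolding B_def D_def sum.distrib[symmetric]
    by (rule sum.cong) (auto simp: xy algebra_simps)
  have L5: "D = (\<Sum>u\<le>M. (b choose u) * (a choose (M - u)) * y u)"
  proof -
    have "(\<Sum>u\<le>M. (b choose u) * (a choose (M - u)) * y u) =
       (\<Sum>u=0..M. (b choose u) * (a choose (M - u)) * y u)" by (simp add: atLeast0AtMost)
    also have "\<dots> = (\<Sum>u=0..M. (b choose (M - u)) * (a choose (M - (M - u))) * y (M - u))"
      by (subst sum.atLeastAtMost_rev) simp
    also have "\<dots> = D" unfolding D_def atLeast0AtMost[symmetric]
      by (rule sum.cong) auto
    finally show ?thesis ..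
  qed
  show ?thesis using L1 L2 L3 L4 L5 by simp
qed

lemma chain_iff:
  "(\<forall>j. j + 1 < length xs \<longrightarrow> R (xs ! j) (xs ! (j + 1))) \<longleftrightarrow> successively R xs"
proof (induction R xs rule: successively.induct)
  case (3 P x y xs)
  have "(\<forall>j. j + 1 < length (x # y # xs) \<longrightarrow> P ((x # y # xs) ! j) ((x # y # xs) ! (j + 1)))
     \<longleftrightarrow> P x y \<and> (\<forall>j. j + 1 < length (y # xs) \<longrightarrow> P ((y # xs) ! j) ((y # xs) ! (j + 1)))"
    (is "?L \<longleftrightarrow> ?R")
  proof
    assume L: ?L
    have "P x y" using L[rule_format, of 0] by simp
    moreover have "\<forall>j. j + 1 < length (y # xs) \<longrightarrow> P ((y # xs) ! j) ((y # xs) ! (j + 1))"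
    proof (intro allI impI)
      fix j assume "j + 1 < length (y # xs)"
      then show "P ((y # xs) ! j) ((y # xs) ! (j + 1))" using L[rule_format, of "Suc j"] by simp
    qed
    ultimately show ?R by blast
  next
    assume R: ?R
    show ?L
    proof (intro allI impI)
      fix j assume j: "j + 1 < length (x # y # xs)"
      show "P ((x # y # xs) ! j) ((x # y # xs) ! (j + 1))"
      proof (cases j)
        case 0 then show ?thesis using R by simp
      next
        case (Suc j') then show ?thesis using R j by auto
      qed
    qed
  qed
  then show ?case using 3 by simp
qed auto

lemma paths_alt:
  "gamma_paths a b = {xs. xs \<noteq> [] \<and> hd xs = a \<and> last xs = b \<and> successively gamma_edge xs}"
  unfolding gamma_paths_def using chain_iff[of _ gamma_edge] by blast

lemma paths_rec:
  "gamma_paths a v = (if v = a then {[v]} else {}) \<union>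
     (\<lambda>xs. xs @ [v]) ` (\<Union>u\<in>{u. gamma_edge u v}. gamma_paths a u)"
proof (rule set_eqI)
  fix xs
  show "xs \<in> gamma_paths a v \<longleftrightarrow> xs \<in> (if v = a then {[v]} else {}) \<union>
     (\<lambda>xs. xs @ [v]) ` (\<Union>u\<in>{u. gamma_edge u v}. gamma_paths a u)"
  proof
    assume "xs \<in> gamma_paths a v"
    then have xs: "xs \<noteq> []" "hd xs = a" "last xs = v" "successively gamma_edge xs"
      by (auto simp: paths_alt)
    then obtain ys z where yz: "xs = ys @ [z]" by (metis rev_exhaust)
    show "xs \<in> (if v = a then {[v]} else {}) \<union>
     (\<lambda>xs. xs @ [v]) ` (\<Union>u\<in>{u. gamma_edge u v}. gamma_paths a u)"
    proof (cases "ys = []")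
      case True then show ?thesis using xs yz by auto
    next
      case False
      have "successively gamma_edge ys" "gamma_edge (last ys) v"
        using xs yz False by (auto simp: successively_append_iff)
      moreover have "hd ys = a" using xs yz False by simp
      ultimately have "ys \<in> gamma_paths a (last ys)" using False by (auto simp: paths_alt)
      moreover have "xs = ys @ [v]" using yz xs by simp
      ultimately have "xs \<in> (\<lambda>xs. xs @ [v]) ` (\<Union>u\<in>{u. gamma_edge u v}. gamma_paths a u)"
        using \<open>gamma_edge (last ys) v\<close> by blast
      then show ?thesis by blast
    qed
  next
    assume "xs \<in> (if v = a then {[v]} else {}) \<union>
     (\<lambda>xs. xs @ [v]) ` (\<Union>u\<in>{u. gamma_edge u v}. gamma_paths a u)"
    then show "xs \<in> gamma_paths a v"
    proof
      assume "xs \<in> (if v = a then {[v]} else {})"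
      then show ?thesis by (auto simp: paths_alt split: if_splits)
    next
      assume "xs \<in> (\<lambda>xs. xs @ [v]) ` (\<Union>u\<in>{u. gamma_edge u v}. gamma_paths a u)"
      then obtain u ys where "gamma_edge u v" "ys \<in> gamma_paths a u" "xs = ys @ [v]" by auto
      then show ?thesis by (auto simp: paths_alt successively_append_iff)
    qed
  qed
qed

lemma edge_char:
  "gamma_edge u (m, j) \<longleftrightarrow> 1 \<le> j \<and> j \<le> m \<and> (u = (m, j - 1) \<or> u = (m - 1, m - j))"
proof
  assume "gamma_edge u (m, j)"
  then show "1 \<le> j \<and> j \<le> m \<and> (u = (m, j - 1) \<or> u = (m - 1, m - j))"
    unfolding gamma_edge_def by auto
next
  assume h: "1 \<le> j \<and> j \<le> m \<and> (u = (m, j - 1) \<or> u = (m - 1, m - j))"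
  then have "m = (m - 1) + 1" "j = (j - 1) + 1" "j - 1 \<le> m - 1" "m - j = (m - 1) - (j - 1)" by auto
  then show "gamma_edge u (m, j)" unfolding gamma_edge_def using h
    by (metis (no_types, lifting))
qed

lemma pred_set:
  "{u. gamma_edge u (m, j)} = (if 1 \<le> j \<and> j \<le> m then {(m, j - 1), (m - 1, m - j)} else {})"
  using edge_char by auto

lemma paths_finite: "finite (gamma_paths a (m, j))"
proof (induction m arbitrary: j)
  case 0
  show ?case
    by (subst paths_rec) (auto simp: pred_set)
next
  case (Suc m)
  note IHm = Suc.IH
  show ?case
  proof (induction j)
    case 0 then show ?case by (subst paths_rec) (simp add: pred_set)
  next
    case (Suc j) then show ?case using IHm[of "m - j"]
      by (subst paths_rec) (simp add: pred_set)
  qed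
qed

lemma pc_col0: "pi_count m 0 i = (if m = i then 1 else 0)"
  unfolding pi_count_def by (subst paths_rec) (simp add: pred_set)

lemma pc_rec:
  assumes "1 \<le> j" "j \<le> m"
  shows "pi_count m j i = pi_count m (j - 1) i + pi_count (m - 1) (m - j) i"
proof -
  let ?P = "gamma_paths (i, 0)"
  have ne: "(m, j) \<noteq> (i, 0)" using assms by auto
  have eq: "?P (m, j) = (\<lambda>xs. xs @ [(m, j)]) ` (?P (m, j - 1) \<union> ?P (m - 1, m - j))"
    using assms ne by (subst paths_rec) (simp add: pred_set)
  have disj: "?P (m, j - 1) \<inter> ?P (m - 1, m - j) = {}"
  proof (rule ccontr)
    assume "?P (m, j - 1) \<inter> ?P (m - 1, m - j) \<noteq> {}"
    then obtain x where "x \<in> ?P (m, j - 1)" "x \<in> ?P (m - 1, m - j)" by blast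
    then have "last x = (m, j - 1)" "last x = (m - 1, m - j)" unfolding paths_alt by auto
    then have "m - 1 = m" by simp
    then show False using assms by linarith
  qed
  have "card (?P (m, j)) = card (?P (m, j - 1) \<union> ?P (m - 1, m - j))"
    unfolding eq by (rule card_image) (simp add: inj_on_def)
  also have "\<dots> = card (?P (m, j - 1)) + card (?P (m - 1, m - j))"
    by (rule card_Un_disjoint) (simp add: paths_finite, simp add: paths_finite, rule disj)
  finally show ?thesis unfolding pi_count_def .
qed

lemma pc_below: "m < i \<Longrightarrow> j \<le> m \<Longrightarrow> pi_count m j i = 0"
proof (induction m arbitrary: j)
  case 0 then show ?case by (simp add: pc_col0)
next
  case (Suc m)
  note IHm = Suc.IH
  show ?case using Suc.prems
  proof (induction j)
    case 0 then show ?case by (simp add: pc_col0)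
  next
    case (Suc j)
    then show ?case using IHm[of "m - j"] pc_rec[of "Suc j" "Suc m" i]
      by simp
  qed
qed

lemma pc_row: "k \<le> i \<Longrightarrow> pi_count i k i = 1"
proof (induction k)
  case 0 then show ?case by (simp add: pc_col0)
next
  case (Suc k)
  then show ?case using pc_rec[of "Suc k" i i] pc_below[of "i - 1" i "i - Suc k"] by simp
qed

lemma main:
  "k \<le> i + d \<Longrightarrow> pi_count (i + d) k i =
     (\<Sum>s\<le>d. (k choose s) * ((i + d - k) choose (d - s)) * pi_count d s 0)"
proof (induction d arbitrary: k)
  case 0 then show ?case by (simp add: pc_row pc_col0)
next
  case (Suc d)
  note IHd = Suc.IH
  show ?case using Suc.prems
  proof (induction k)
    case 0
    have "(\<Sum>s\<le>Suc d. (0 choose s) * ((i + Suc d - 0) choose (Suc d - s)) * pi_count (Suc d) s 0) = 0"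
      by (rule sum.neutral) (auto simp: pc_col0)
    then show ?case by (simp add: pc_col0)
  next
    case (Suc k)
    have r: "pi_count (i + Suc d) (Suc k) i = pi_count (i + Suc d) k i + pi_count (i + d) (i + Suc d - Suc k) i"
      using pc_rec[of "Suc k" "i + Suc d" i] Suc.prems by simp
    have h1: "pi_count (i + Suc d) k i =
       (\<Sum>s\<le>Suc d. (k choose s) * (Suc (i + Suc d - Suc k) choose (Suc d - s)) * pi_count (Suc d) s 0)"
      using Suc.IH Suc.prems Suc_diff_le by auto
    have h2: "pi_count (i + d) (i + Suc d - Suc k) i =
       (\<Sum>u\<le>d. ((i + Suc d - Suc k) choose u) * (k choose (d - u)) * pi_count d u 0)"
    proof -
      have "i + d - (i + Suc d - Suc k) = k" using Suc.prems by simp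
      then show ?thesis using IHd[of "i + Suc d - Suc k"] Suc.prems by simp
    qed
    have xy: "\<And>s. s \<le> d \<Longrightarrow> pi_count (Suc d) (Suc s) 0 = pi_count (Suc d) s 0 + pi_count d (d - s) 0"
      using pc_rec by simp
    show ?case
      unfolding r h1 h2
      using alg[of d "\<lambda>s. pi_count (Suc d) s 0" "\<lambda>u. pi_count d u 0" k "i + Suc d - Suc k", OF xy]
      by simp
  qed
qed

theorem proposition4:
  fixes n k i :: nat
  assumes "n \<ge> 2" and "0 < k" and "k < n" and "0 < i" and "i \<le> n"
  shows "pi_count n k i =
    (\<Sum>s = 0..min k (n - i). (k choose s) * ((n - k) choose (n - i - s)) * pi_count (n - i) s 0)"
proof -
  have n: "n = i + (n - i)" using assms by simp
  have "pi_count n k i = (\<Sum>s\<le>n - i. (k choose s) * ((n - k) choose (n - i - s)) * pi_count (n - i) s 0)"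
    using main[of k i "n - i"] n assms by simp
  also have "\<dots> = (\<Sum>s = 0..min k (n - i). (k choose s) * ((n - k) choose (n - i - s)) * pi_count (n - i) s 0)"
    by (rule sum.mono_neutral_right) auto
  finally show ?thesis .
qed

end
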